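(* Let $V:\mathcal{H}_L\otimes\mathcal{H}_J\to\mathcal{H}_p$ be the encoding isometry of a subsystem code on a physical system consisting of a collection of subsystems, and let $R$ be a correctable region. Then every dressed-CSP operator $A$ supported on $R$ implements a logical operation of the form $\mathrm{Id}_L\otimes A_J$ for some $A_J\in\mathcal{B}(\mathcal{H}_J)$.
   Context: $\Pi=VV^\dagger$. An operator $A$ on $\mathcal{H}_p$ is codespace-preserving (CSP) if $[A,\Pi]=0$; dressed-CSP if moreover $V^\dagger AV=A_L\otimes A_J$ for some $A_L\in\mathcal{B}(\mathcal{H}_L)$, $A_J\in\mathcal{B}(\mathcal{H}_J)$ (then $A$ implements $A_L\otimes A_J$); bare-CSP if moreover $A_J=\mathrm{Id}_J$. A region $R$ is a set of physical subsystems; $A$ is supported on $R$ if $A=A_R\otimes\mathrm{Id}_{R^c}$. $R$ is correctable if for every $A_L\in\mathcal{B}(\mathcal{H}_L)$ there is a bare-CSP operator supported on $R^c$ implementing $A_L\otimes\mathrm{Id}_J$. *)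

theory Defs
  imports Complex_Main "HOL-Library.FuncSet"
begin

(* The physical system consists of finitely many
   subsystems (sites, a finite type 's); site i has orthonormal basis indexed by
   the finite nonempty set D i.  The physical Hilbert space H_p has orthonormal
   basis the configurations phys D = Pi_E UNIV D.  Operators are matrices w.r.t.
   these bases (only their entries on the relevant basis sets matter).
   H_L, H_J have orthonormal bases indexed by finite types 'l, 'j. *)

type_synonym ('s,'b) pop = "('s \<Rightarrow> 'b) \<Rightarrow> ('s \<Rightarrow> 'b) \<Rightarrow> complex"
type_synonym ('l,'j) lop = "('l \<times> 'j) \<Rightarrow> ('l \<times> 'j) \<Rightarrow> complex"

definition phys :: "('s \<Rightarrow> 'b set) \<Rightarrow> ('s \<Rightarrow> 'b) set" where
  "phys D = PiE UNIV D"

definition pop_eq :: "('s \<Rightarrow> 'b set) \<Rightarrow> ('s,'b) pop \<Rightarrow> ('s,'b) pop \<Rightarrow> bool" where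
  "pop_eq D A B \<longleftrightarrow> (\<forall>x\<in>phys D. \<forall>y\<in>phys D. A x y = B x y)"

definition pmult :: "('s \<Rightarrow> 'b set) \<Rightarrow> ('s,'b) pop \<Rightarrow> ('s,'b) pop \<Rightarrow> ('s,'b) pop" where
  "pmult D A B = (\<lambda>x y. \<Sum>z\<in>phys D. A x z * B z y)"

definition isometry :: "('s \<Rightarrow> 'b set) \<Rightarrow> (('s \<Rightarrow> 'b) \<Rightarrow> ('l::finite \<times> 'j::finite) \<Rightarrow> complex) \<Rightarrow> bool" where
  "isometry D V \<longleftrightarrow>
     (\<forall>a b. (\<Sum>x\<in>phys D. cnj (V x a) * V x b) = (if a = b then 1 else 0))"

definition code_proj :: "(('s \<Rightarrow> 'b) \<Rightarrow> ('l::finite \<times> 'j::finite) \<Rightarrow> complex) \<Rightarrow> ('s,'b) pop" where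
  "code_proj V = (\<lambda>x y. \<Sum>a\<in>UNIV. V x a * cnj (V y a))"

definition enc_conj :: "('s \<Rightarrow> 'b set) \<Rightarrow> (('s \<Rightarrow> 'b) \<Rightarrow> ('l \<times> 'j) \<Rightarrow> complex) \<Rightarrow> ('s,'b) pop \<Rightarrow> ('l,'j) lop" where
  "enc_conj D V A = (\<lambda>a b. \<Sum>x\<in>phys D. \<Sum>y\<in>phys D. cnj (V x a) * A x y * V y b)"

definition id_op :: "'a \<Rightarrow> 'a \<Rightarrow> complex" where
  "id_op = (\<lambda>a b. if a = b then 1 else 0)"

definition tensor :: "('l \<Rightarrow> 'l \<Rightarrow> complex) \<Rightarrow> ('j \<Rightarrow> 'j \<Rightarrow> complex) \<Rightarrow> ('l,'j) lop" where
  "tensor AL AJ = (\<lambda>a b. AL (fst a) (fst b) * AJ (snd a) (snd b))"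

definition csp :: "('s \<Rightarrow> 'b set) \<Rightarrow> (('s \<Rightarrow> 'b) \<Rightarrow> ('l::finite \<times> 'j::finite) \<Rightarrow> complex) \<Rightarrow> ('s,'b) pop \<Rightarrow> bool" where
  "csp D V A \<longleftrightarrow> pop_eq D (pmult D A (code_proj V)) (pmult D (code_proj V) A)"

definition implements :: "('s \<Rightarrow> 'b set) \<Rightarrow> (('s \<Rightarrow> 'b) \<Rightarrow> ('l \<times> 'j) \<Rightarrow> complex) \<Rightarrow> ('s,'b) pop \<Rightarrow> ('l,'j) lop \<Rightarrow> bool" where
  "implements D V A M \<longleftrightarrow> enc_conj D V A = M"

definition dressed_csp :: "('s \<Rightarrow> 'b set) \<Rightarrow> (('s \<Rightarrow> 'b) \<Rightarrow> ('l::finite \<times> 'j::finite) \<Rightarrow> complex) \<Rightarrow> ('s,'b) pop \<Rightarrow> bool" where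
  "dressed_csp D V A \<longleftrightarrow> csp D V A \<and> (\<exists>AL AJ. implements D V A (tensor AL AJ))"

definition bare_csp :: "('s \<Rightarrow> 'b set) \<Rightarrow> (('s \<Rightarrow> 'b) \<Rightarrow> ('l::finite \<times> 'j::finite) \<Rightarrow> complex) \<Rightarrow> ('s,'b) pop \<Rightarrow> bool" where
  "bare_csp D V A \<longleftrightarrow> csp D V A \<and> (\<exists>AL. implements D V A (tensor AL id_op))"

(* A = A_R \<otimes> Id_{R^c}: matrix entries factor through the restriction to R and
   are diagonal on the complement of R *)
definition supported_on :: "('s \<Rightarrow> 'b set) \<Rightarrow> 's set \<Rightarrow> ('s,'b) pop \<Rightarrow> bool" where
  "supported_on D R A \<longleftrightarrow>
     (\<exists>AR :: ('s \<Rightarrow> 'b) \<Rightarrow> ('s \<Rightarrow> 'b) \<Rightarrow> complex.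
        \<forall>x\<in>phys D. \<forall>y\<in>phys D.
          A x y = (if (\<forall>i\<in>-R. x i = y i) then AR (restrict x R) (restrict y R) else 0))"

definition correctable :: "('s \<Rightarrow> 'b set) \<Rightarrow> (('s \<Rightarrow> 'b) \<Rightarrow> ('l::finite \<times> 'j::finite) \<Rightarrow> complex) \<Rightarrow> 's set \<Rightarrow> bool" where
  "correctable D V R \<longleftrightarrow>
     (\<forall>AL :: 'l \<Rightarrow> 'l \<Rightarrow> complex. \<exists>B :: ('s,'b) pop.
        supported_on D (-R) B \<and> bare_csp D V B \<and> implements D V B (tensor AL id_op))"

end

theory Submission
  imports Defs
begin

definition mm :: "'c set \<Rightarrow> ('a \<Rightarrow> 'c \<Rightarrow> complex) \<Rightarrow> ('c \<Rightarrow> 'b \<Rightarrow> complex) \<Rightarrow> 'a \<Rightarrow> 'b \<Rightarrow> complex" where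
  "mm S M N = (\<lambda>x y. \<Sum>z\<in>S. M x z * N z y)"

lemma mm_assoc: "finite S \<Longrightarrow> finite T \<Longrightarrow> mm S (mm T M N) K = mm T M (mm S N K)"
  unfolding mm_def
  apply (rule ext)+
  apply (simp add: sum_distrib_left sum_distrib_right mult.assoc)
  apply (rule sum.swap)
  done

lemma mm_cong:
  assumes "\<forall>x\<in>P. \<forall>y\<in>P. X x y = Y x y"
  shows "mm P (mm P M X) N = mm P (mm P M Y) N"
  unfolding mm_def using assms
  by (intro ext sum.cong refl arg_cong2[where f="(*)"]) auto

lemma mm_id_left: "mm (UNIV::'a::finite set) id_op M = M"
  unfolding mm_def id_op_def
proof (intro ext)
  fix x y
  have "(\<Sum>z\<in>UNIV. (if x = z then 1 else 0) * M z y) = (\<Sum>z\<in>UNIV. if x = z then M z y else 0)"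
    by (rule sum.cong) auto
  also have "\<dots> = M x y" by simp
  finally show "(\<Sum>z\<in>UNIV. (if x = z then 1 else 0) * M z y) = M x y" .
qed

lemma finite_phys: "\<forall>i. finite (D i) \<Longrightarrow> finite (phys (D :: 's::finite \<Rightarrow> 'b set))"
  unfolding phys_def by (intro finite_PiE) auto

lemma enc_mm: "enc_conj D V A = mm (phys D) (mm (phys D) (\<lambda>a x. cnj (V x a)) A) V"
  unfolding enc_conj_def mm_def
  apply (rule ext)+
  apply (subst sum.swap)
  apply (simp add: sum_distrib_right)
  done

lemma key:
  fixes D :: "'s::finite \<Rightarrow> 'b set"
    and V :: "('s \<Rightarrow> 'b) \<Rightarrow> ('l::finite \<times> 'j::finite) \<Rightarrow> complex"
  assumes fin: "\<forall>i. finite (D i)" and iso: "isometry D V" and c: "csp D V A"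
  shows "mm UNIV (enc_conj D V A) (enc_conj D V B) = enc_conj D V (pmult D A B)"
proof -
  let ?P = "phys D"
  let ?Vd = "\<lambda>a x. cnj (V x a)"
  let ?U = "UNIV :: ('l \<times> 'j) set"
  let ?Pi = "mm ?U V ?Vd"
  have fP: "finite ?P" using fin finite_phys by blast
  have fU: "finite ?U" by simp
  have isoV: "mm ?P ?Vd V = id_op"
    by (intro ext, unfold mm_def id_op_def, rule iso[unfolded isometry_def, rule_format])
  have Pi: "code_proj V = ?Pi" unfolding code_proj_def mm_def by simp
  have pm: "\<And>X Y. pmult D X Y = mm ?P X Y" unfolding pmult_def mm_def by simp
  have cc: "\<forall>x\<in>?P. \<forall>y\<in>?P. mm ?P A ?Pi x y = mm ?P ?Pi A x y"
    using c unfolding csp_def pop_eq_def Pi pm by simp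
  have VdPi: "mm ?P ?Vd ?Pi = ?Vd"
    using mm_assoc[OF fU fP, of ?Vd V ?Vd, symmetric] isoV mm_id_left by simp
  have "mm ?U (enc_conj D V A) (enc_conj D V B)
      = mm ?U (mm ?P (mm ?P ?Vd A) V) (mm ?P (mm ?P ?Vd B) V)" by (simp add: enc_mm)
  also have "\<dots> = mm ?P (mm ?U (mm ?P (mm ?P ?Vd A) V) (mm ?P ?Vd B)) V"
    by (simp add: mm_assoc fP)
  also have "mm ?U (mm ?P (mm ?P ?Vd A) V) (mm ?P ?Vd B)
      = mm ?P (mm ?U (mm ?P (mm ?P ?Vd A) V) ?Vd) B"
    by (simp add: mm_assoc fP)
  also have "mm ?U (mm ?P (mm ?P ?Vd A) V) ?Vd = mm ?P ?Vd (mm ?P A ?Pi)"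
    by (simp add: mm_assoc fP)
  finally have e1: "mm ?U (enc_conj D V A) (enc_conj D V B)
      = mm ?P (mm ?P (mm ?P ?Vd (mm ?P A ?Pi)) B) V" .
  also have "\<dots> = mm ?P (mm ?P ?Vd (mm ?P A ?Pi)) (mm ?P B V)"
    by (simp add: mm_assoc fP)
  also have "\<dots> = mm ?P (mm ?P ?Vd (mm ?P ?Pi A)) (mm ?P B V)"
    by (rule mm_cong[OF cc])
  also have "mm ?P ?Vd (mm ?P ?Pi A) = mm ?P (mm ?P ?Vd ?Pi) A"
    by (simp add: mm_assoc fP)
  also have "\<dots> = mm ?P ?Vd A" using VdPi by simp
  also have "mm ?P (mm ?P ?Vd A) (mm ?P B V) = mm ?P (mm ?P (mm ?P ?Vd A) B) V"
    by (simp add: mm_assoc fP)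
  also have "\<dots> = enc_conj D V (pmult D A B)"
    by (simp add: mm_assoc fP enc_mm pm)
  finally show ?thesis .
qed


lemma sum_single:
  assumes "finite S" "z0 \<in> S" "\<forall>z\<in>S. z \<noteq> z0 \<longrightarrow> f z = 0"
  shows "sum f S = f z0"
proof -
  have "sum f S = sum f {z0}"
    by (rule sum.mono_neutral_right) (use assms in auto)
  then show ?thesis by simp
qed

lemma comm:
  fixes D :: "'s::finite \<Rightarrow> 'b set"
  assumes fin: "\<forall>i. finite (D i)" and sA: "supported_on D R A" and sB: "supported_on D (-R) B"
    and x: "x \<in> phys D" and y: "y \<in> phys D"
  shows "pmult D A B x y = pmult D B A x y"
proof -
  have fP: "finite (phys D)" using fin finite_phys by blast
  obtain AR where AR: "\<forall>x\<in>phys D. \<forall>y\<in>phys D.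
          A x y = (if (\<forall>i\<in>-R. x i = y i) then AR (restrict x R) (restrict y R) else 0)"
    using sA unfolding supported_on_def by blast
  obtain BR where BR: "\<forall>x\<in>phys D. \<forall>y\<in>phys D.
          B x y = (if (\<forall>i\<in>-(-R). x i = y i) then BR (restrict x (-R)) (restrict y (-R)) else 0)"
    using sB unfolding supported_on_def by blast
  define z0 where "z0 = (\<lambda>i. if i \<in> R then y i else x i)"
  define z1 where "z1 = (\<lambda>i. if i \<in> R then x i else y i)"
  have z0P: "z0 \<in> phys D" using x y unfolding z0_def phys_def by (auto simp: PiE_iff)
  have z1P: "z1 \<in> phys D" using x y unfolding z1_def phys_def by (auto simp: PiE_iff)
  have "pmult D A B x y = A x z0 * B z0 y"
    unfolding pmult_def
  proof (rule sum_single[OF fP z0P], intro ballI impI)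
    fix z assume zP: "z \<in> phys D" and ne: "z \<noteq> z0"
    have "\<not> ((\<forall>i\<in>-R. x i = z i) \<and> (\<forall>i\<in>-(-R). z i = y i))"
      using ne unfolding z0_def fun_eq_iff by (metis ComplI double_complement)
    then show "A x z * B z y = 0" using AR BR x y zP by auto
  qed
  also have "\<dots> = AR (restrict x R) (restrict y R) * BR (restrict x (-R)) (restrict y (-R))"
  proof -
    have "restrict z0 R = restrict y R" "restrict z0 (-R) = restrict x (-R)"
      unfolding z0_def by (auto simp: restrict_def)
    then show ?thesis using AR BR x y z0P unfolding z0_def by auto
  qed
  also have "\<dots> = B x z1 * A z1 y"
  proof -
    have "restrict z1 R = restrict x R" "restrict z1 (-R) = restrict y (-R)"
      unfolding z1_def by (auto simp: restrict_def)
    then show ?thesis using AR BR x y z1P unfolding z1_def by auto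
  qed
  also have "\<dots> = pmult D B A x y"
    unfolding pmult_def
  proof (rule sum_single[OF fP z1P, symmetric], intro ballI impI)
    fix z assume zP: "z \<in> phys D" and ne: "z \<noteq> z1"
    have "\<not> ((\<forall>i\<in>-(-R). x i = z i) \<and> (\<forall>i\<in>-R. z i = y i))"
      using ne unfolding z1_def fun_eq_iff by (metis ComplI double_complement)
    then show "B x z * A z y = 0" using AR BR x y zP by auto
  qed
  finally show ?thesis .
qed

lemma sum_pairs: "(\<Sum>z\<in>(UNIV::('a::finite \<times> 'b::finite) set). f z) = (\<Sum>c\<in>UNIV. \<Sum>j\<in>UNIV. f (c, j))"
  by (simp add: sum.cartesian_product UNIV_Times_UNIV[symmetric] del: UNIV_Times_UNIV)

lemma tmul1: "mm UNIV (tensor AL AJ) (tensor BL id_op) ((a::'l::finite), (j::'j::finite)) (b, k)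
   = (\<Sum>c\<in>UNIV. AL a c * BL c b) * AJ j k"
  unfolding mm_def tensor_def id_op_def
  by (simp add: sum_pairs sum_distrib_right if_distrib[of "\<lambda>c. _ * c"] mult_ac sum_distrib_left cong: if_cong)

lemma tmul2: "mm UNIV (tensor BL id_op) (tensor AL AJ) ((a::'l::finite), (j::'j::finite)) (b, k)
   = (\<Sum>c\<in>UNIV. BL a c * AL c b) * AJ j k"
  unfolding mm_def tensor_def id_op_def
  by (simp add: sum_pairs sum_distrib_right if_distrib[of "\<lambda>c. c * _"] if_distrib[of "\<lambda>c. _ * c"] mult_ac sum_distrib_left cong: if_cong)


theorem lemma2:
  fixes D :: "'s::finite \<Rightarrow> 'b set"
    and V :: "('s \<Rightarrow> 'b) \<Rightarrow> ('l::finite \<times> 'j::finite) \<Rightarrow> complex"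
    and R :: "'s set"
    and A :: "('s \<Rightarrow> 'b) \<Rightarrow> ('s \<Rightarrow> 'b) \<Rightarrow> complex"
  assumes "\<forall>i. finite (D i) \<and> D i \<noteq> {}"
    and "isometry D V"
    and "correctable D V R"
    and "dressed_csp D V A"
    and "supported_on D R A"
  shows "\<exists>AJ :: 'j \<Rightarrow> 'j \<Rightarrow> complex. implements D V A (tensor id_op AJ)"
proof -
  have fin: "\<forall>i. finite (D i)" using assms(1) by blast
  obtain AL AJ where cA: "csp D V A" and TA: "enc_conj D V A = tensor AL AJ"
    using assms(4) unfolding dressed_csp_def implements_def by blast
  let ?Vd = "\<lambda>a x. cnj (V x a)"
  have C: "(\<Sum>c\<in>UNIV. AL a c * BL c b) * AJ j k = (\<Sum>c\<in>UNIV. BL a c * AL c b) * AJ j k"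
    for BL a b j k
  proof -
    obtain B where sB: "supported_on D (-R) B" and cB: "csp D V B"
      and TB: "enc_conj D V B = tensor BL id_op"
      using assms(3) unfolding correctable_def bare_csp_def implements_def by blast
    have "mm UNIV (tensor AL AJ) (tensor BL id_op) = enc_conj D V (pmult D A B)"
      using key[OF fin assms(2) cA, of B] unfolding TA TB .
    also have "\<dots> = enc_conj D V (pmult D B A)"
      unfolding enc_mm by (rule mm_cong) (use comm[OF fin assms(5) sB] in blast)
    also have "\<dots> = mm UNIV (tensor BL id_op) (tensor AL AJ)"
      using key[OF fin assms(2) cB, of A] unfolding TA TB by (rule sym)
    finally have "mm UNIV (tensor AL AJ) (tensor BL id_op) (a, j) (b, k)
        = mm UNIV (tensor BL id_op) (tensor AL AJ) (a, j) (b, k)" by (rule arg_cong)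
    then show ?thesis by (simp only: tmul1 tmul2)
  qed
  define l0 :: 'l where "l0 = undefined"
  define E :: "'l \<Rightarrow> 'l \<Rightarrow> 'l \<Rightarrow> 'l \<Rightarrow> complex" where
    "E p q = (\<lambda>a b. if a = p \<and> b = q then 1 else 0)" for p q
  have E1: "(\<Sum>c\<in>UNIV. AL a c * E p q c b) = (if b = q then AL a p else 0)" for a b p q
  proof -
    have "(\<Sum>c\<in>UNIV. AL a c * E p q c b) = (\<Sum>c\<in>UNIV. if c = p then (if b = q then AL a p else 0) else 0)"
      unfolding E_def by (rule sum.cong) auto
    then show ?thesis by simp
  qed
  have E2: "(\<Sum>c\<in>UNIV. E p q a c * AL c b) = (if a = p then AL q b else 0)" for a b p q
  proof -
    have "(\<Sum>c\<in>UNIV. E p q a c * AL c b) = (\<Sum>c\<in>UNIV. if c = q then (if a = p then AL q b else 0) else 0)"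
      unfolding E_def by (rule sum.cong) auto
    then show ?thesis by simp
  qed
  have main: "AL a b * AJ j k = id_op a b * (AL l0 l0 * AJ j k)" for a b j k
  proof (cases "AJ j k = 0")
    case True then show ?thesis by simp
  next
    case False
    show ?thesis
    proof (cases "a = b")
      case True
      have "AL a a * AJ j k = AL l0 l0 * AJ j k"
        using C[of a "E a l0" l0 j k] E1 E2 by simp
      then show ?thesis using True by (simp add: id_op_def)
    next
      case ne: False
      have "AL a b * AJ j k = 0"
        using C[of a "E b b" b j k] E1 E2 ne by simp
      then show ?thesis using ne by (simp add: id_op_def)
    qed
  qed
  show ?thesis
    unfolding implements_def TA
  proof (rule exI[of _ "\<lambda>j k. AL l0 l0 * AJ j k"], intro ext)
    fix x y :: "'l \<times> 'j"
    show "tensor AL AJ x y = tensor id_op (\<lambda>j k. AL l0 l0 * AJ j k) x y"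
      unfolding tensor_def by (rule main)
  qed
qed

end
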